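(* Let $(\mathbb{X},\oplus,\otimes,\mathbb{0},\mathbb{1})$ be a linearly ordered, algebraically complete idempotent semifield, let $\bm{A}_1,\ldots,\bm{A}_m\in\mathbb{X}^{n\times n}$ be matrices and $w_1,\ldots,w_m\in\mathbb{X}$ scalars such that $\bm{B}=w_{1}(\bm{A}_{1}\oplus\bm{A}_{1}^{-})\oplus\cdots\oplus w_{m}(\bm{A}_{m}\oplus\bm{A}_{m}^{-})$ has no zero entries. Let $\mu$ be the spectral radius of $\bm{B}$ and $\bm{B}_{\mu}=\mu^{-1}\bm{B}$. Consider the problem of minimizing $\max_{1\le i\le m} w_i\, d(\bm{A}_i,\bm{x}\bm{x}^{-})$ (i.e. $\bigoplus_{i=1}^m w_i d(\bm{A}_i,\bm{x}\bm{x}^{-})$) over all regular vectors $\bm{x}\in\mathbb{X}^n$. Then the minimum value equals $\mu$, and the set of all solutions is $\{\bm{x}=\bm{B}_{\mu}^{\ast}\bm{u}:\bm{u}\in\mathbb{X}^n,\ \bm{u}\ne\bm{0}\}$.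
   Context: An idempotent semifield is a set $\mathbb{X}$ with associative, commutative operations $\oplus$ (addition) and $\otimes$ (multiplication, usually omitted in writing) with neutral elements $\mathbb{0}$ and $\mathbb{1}$, multiplication distributing over addition, idempotent addition ($x\oplus x=x$), and every nonzero $x$ having an inverse $x^{-1}$ with $xx^{-1}=\mathbb{1}$. It is assumed linearly ordered by the order $x\le y \iff x\oplus y=y$, and algebraically complete: $x^p=a$ is solvable for every $a$ and integer $p>0$, so rational powers are defined. Matrix and vector operations (including scalar multiplication) use the usual formulas with $\oplus,\otimes$ in place of $+,\times$; $\bm{0}$ is the zero vector; a vector is regular if it has no zero entries. For a nonzero column vector $\bm{x}=(x_i)$, $\bm{x}^{-}$ is the row vector with entries $x_i^{-1}$ if $x_i\ne\mathbb{0}$ and $\mathbb{0}$ otherwise. For a nonzero matrix $\bm{A}=(a_{ij})$, $\bm{A}^{-}=(a^{-}_{ij})$ with $a^{-}_{ij}=a_{ji}^{-1}$ if $a_{ji}\neq\mathbb{0}$ and $\mathbb{0}$ otherwise. The trace is $\mathrm{tr}\,\bm{A}=a_{11}\oplus\cdots\oplus a_{nn}$. The distance between square matrices is $d(\bm{A},\bm{B})=\mathrm{tr}(\bm{B}^{-}\bm{A})\oplus\mathrm{tr}(\bm{A}^{-}\bm{B})$. $\bm{I}$ is the identity matrix, $\bm{A}^0=\bm{I}$, $\bm{A}^p=\bm{A}^{p-1}\bm{A}$. The spectral radius of $\bm{A}$ of order $n$ is $\lambda=\bigoplus_{k=1}^{n}\bigoplus_{1\le i_1,\ldots,i_k\le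 n}(a_{i_1i_2}a_{i_2i_3}\cdots a_{i_ki_1})^{1/k}$. For a square matrix $\bm{M}$ of order $n$, $\bm{M}^{\ast}=\bm{I}\oplus\bm{M}\oplus\cdots\oplus\bm{M}^{n-1}$. *)

theory Defs
  imports Main "HOL-Library.FuncSet"
begin

text \<open>Linearly ordered, algebraically complete idempotent semifield.
  Addition \<oplus> is rendered by +, multiplication \<otimes> by *, \<zero> by 0, \<one> by 1.\<close>

class idem_semifield = comm_semiring_1 + inverse + linorder +
  assumes add_idem: "x + x = x"
    and less_eq_add: "x \<le> y \<longleftrightarrow> x + y = y"
    and right_inverse_sf: "x \<noteq> 0 \<Longrightarrow> x * inverse x = 1"
    and alg_complete: "0 < p \<Longrightarrow> \<exists>x. x ^ p = a"

definition root_sf :: "nat \<Rightarrow> 'a::idem_semifield \<Rightarrow> 'a" where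
  "root_sf k a = (SOME x. x ^ k = a)"

definition mmult :: "('n::finite \<Rightarrow> 'n \<Rightarrow> 'a::idem_semifield) \<Rightarrow> ('n \<Rightarrow> 'n \<Rightarrow> 'a) \<Rightarrow> 'n \<Rightarrow> 'n \<Rightarrow> 'a" where
  "mmult M N = (\<lambda>i j. \<Sum>k\<in>UNIV. M i k * N k j)"

definition mvec :: "('n::finite \<Rightarrow> 'n \<Rightarrow> 'a::idem_semifield) \<Rightarrow> ('n \<Rightarrow> 'a) \<Rightarrow> 'n \<Rightarrow> 'a" where
  "mvec M x = (\<lambda>i. \<Sum>j\<in>UNIV. M i j * x j)"

definition madd :: "('n \<Rightarrow> 'n \<Rightarrow> 'a::idem_semifield) \<Rightarrow> ('n \<Rightarrow> 'n \<Rightarrow> 'a) \<Rightarrow> 'n \<Rightarrow> 'n \<Rightarrow> 'a" where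
  "madd M N = (\<lambda>i j. M i j + N i j)"

definition msmult :: "'a::idem_semifield \<Rightarrow> ('n \<Rightarrow> 'n \<Rightarrow> 'a) \<Rightarrow> 'n \<Rightarrow> 'n \<Rightarrow> 'a" where
  "msmult c M = (\<lambda>i j. c * M i j)"

definition mid :: "'n \<Rightarrow> 'n \<Rightarrow> 'a::idem_semifield" where
  "mid = (\<lambda>i j. if i = j then 1 else 0)"

primrec mpow :: "('n::finite \<Rightarrow> 'n \<Rightarrow> 'a::idem_semifield) \<Rightarrow> nat \<Rightarrow> 'n \<Rightarrow> 'n \<Rightarrow> 'a" where
  "mpow M 0 = mid"
| "mpow M (Suc p) = mmult (mpow M p) M"

definition vinv :: "('n \<Rightarrow> 'a::idem_semifield) \<Rightarrow> 'n \<Rightarrow> 'a" where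
  "vinv x = (\<lambda>i. if x i = 0 then 0 else inverse (x i))"

definition minv :: "('n \<Rightarrow> 'n \<Rightarrow> 'a::idem_semifield) \<Rightarrow> 'n \<Rightarrow> 'n \<Rightarrow> 'a" where
  "minv A = (\<lambda>i j. if A j i = 0 then 0 else inverse (A j i))"

definition outer_inv :: "('n \<Rightarrow> 'a::idem_semifield) \<Rightarrow> 'n \<Rightarrow> 'n \<Rightarrow> 'a" where
  "outer_inv x = (\<lambda>i j. x i * vinv x j)"

definition mtr :: "('n::finite \<Rightarrow> 'n \<Rightarrow> 'a::idem_semifield) \<Rightarrow> 'a" where
  "mtr A = (\<Sum>i\<in>UNIV. A i i)"

definition mdist :: "('n::finite \<Rightarrow> 'n \<Rightarrow> 'a::idem_semifield) \<Rightarrow> ('n \<Rightarrow> 'n \<Rightarrow> 'a) \<Rightarrow> 'a" where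
  "mdist A B = mtr (mmult (minv B) A) + mtr (mmult (minv A) B)"

definition regular :: "('n \<Rightarrow> 'a::idem_semifield) \<Rightarrow> bool" where
  "regular x \<longleftrightarrow> (\<forall>i. x i \<noteq> 0)"

definition spec_rad :: "('n::finite \<Rightarrow> 'n \<Rightarrow> 'a::idem_semifield) \<Rightarrow> 'a" where
  "spec_rad A = (\<Sum>k\<in>{1 .. card (UNIV::'n set)}. \<Sum>s\<in>PiE {..<k} (\<lambda>_. (UNIV::'n set)).
      root_sf k (\<Prod>j<k. A (s j) (s (Suc j mod k))))"

definition kstar :: "('n::finite \<Rightarrow> 'n \<Rightarrow> 'a::idem_semifield) \<Rightarrow> 'n \<Rightarrow> 'n \<Rightarrow> 'a" where
  "kstar M = (\<lambda>i j. \<Sum>p<card (UNIV::'n set). mpow M p i j)"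

end

theory Submission
  imports Defs
begin

context idem_semifield begin

lemma sf_zero_least: "0 \<le> x" by (simp add: less_eq_add)

lemma sf_add_max: "x + y = max x y"
proof (cases "x \<le> y")
  case True then show ?thesis using less_eq_add by (simp add: max_def)
next
  case False then have "y \<le> x" by simp
  then have "y + x = x" using less_eq_add by blast
  then show ?thesis using False by (simp add: max_def add.commute)
qed

lemma sf_add_le_iff: "x + y \<le> z \<longleftrightarrow> x \<le> z \<and> y \<le> z"
  by (simp add: sf_add_max)

lemma sf_le_add1: "x \<le> x + y" by (simp add: sf_add_max)
lemma sf_le_add2: "y \<le> x + y" by (simp add: sf_add_max)

lemma sf_mult_right_mono: "a \<le> b \<Longrightarrow> a * c \<le> b * c"
proof -
  assume "a \<le> b" then have "a + b = b" using less_eq_add by blast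
  then have "a * c + b * c = b * c" by (metis distrib_right)
  then show ?thesis using less_eq_add by blast
qed

lemma sf_mult_left_mono: "a \<le> b \<Longrightarrow> c * a \<le> c * b"
  using sf_mult_right_mono by (simp add: mult.commute)

lemma sf_mult_mono: "a \<le> b \<Longrightarrow> c \<le> d \<Longrightarrow> a * c \<le> b * d"
  by (meson order_trans sf_mult_left_mono sf_mult_right_mono)

lemma sf_add_mono: "a \<le> b \<Longrightarrow> c \<le> d \<Longrightarrow> a + c \<le> b + d"
  by (metis sf_add_le_iff sf_le_add1 sf_le_add2 order_trans)

lemma sf_left_inverse: "x \<noteq> 0 \<Longrightarrow> inverse x * x = 1"
  using right_inverse_sf by (simp add: mult.commute)

lemma sf_no_zero_div: "a \<noteq> 0 \<Longrightarrow> b \<noteq> 0 \<Longrightarrow> a * b \<noteq> 0"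
proof
  assume a: "a \<noteq> 0" "b \<noteq> 0" "a * b = 0"
  have "b = (inverse a * a) * b" using sf_left_inverse[OF a(1)] by simp
  also have "\<dots> = inverse a * (a * b)" by (simp add: mult.assoc)
  finally show False using a by simp
qed

lemma sf_inverse_nz: "x \<noteq> 0 \<Longrightarrow> inverse x \<noteq> 0"
  by (metis mult_zero_right right_inverse_sf zero_neq_one)

lemma sf_inverse_unique: "a * b = 1 \<Longrightarrow> b = inverse a"
proof -
  assume h: "a * b = 1"
  then have a: "a \<noteq> 0" by auto
  have "b = (inverse a * a) * b" using sf_left_inverse[OF a] by simp
  also have "\<dots> = inverse a" using h by (simp add: mult.assoc)
  finally show ?thesis .
qed

lemma sf_inverse_mult: "a \<noteq> 0 \<Longrightarrow> b \<noteq> 0 \<Longrightarrow> inverse (a * b) = inverse a * inverse b"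
proof -
  assume a: "a \<noteq> 0" "b \<noteq> 0"
  have "(a * b) * (inverse a * inverse b) = (a * inverse a) * (b * inverse b)"
    by (simp add: ac_simps)
  then show ?thesis using a right_inverse_sf sf_inverse_unique by (metis mult_1_right)
qed

lemma sf_inverse_inverse: "a \<noteq> 0 \<Longrightarrow> inverse (inverse a) = a"
  using sf_inverse_unique sf_left_inverse by metis

lemma sf_mult_le_cancel: "c \<noteq> 0 \<Longrightarrow> c * a \<le> c * b \<longleftrightarrow> a \<le> b"
proof
  assume c: "c \<noteq> 0" and "c * a \<le> c * b"
  have "inverse c * (c * a) \<le> inverse c * (c * b)" using \<open>c * a \<le> c * b\<close> by (rule sf_mult_left_mono)
  then show "a \<le> b" using sf_left_inverse[OF c] by (simp add: mult.assoc[symmetric])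
qed (rule sf_mult_left_mono)

lemma sf_sum_le_iff: "finite A \<Longrightarrow> sum f A \<le> c \<longleftrightarrow> (\<forall>x\<in>A. f x \<le> c)"
  by (induction A rule: finite_induct) (auto simp: sf_add_le_iff sf_zero_least)

lemma sf_member_le_sum: "finite A \<Longrightarrow> x \<in> A \<Longrightarrow> f x \<le> sum f A"
  using sf_sum_le_iff[of A f "sum f A"] by auto

lemma sf_sum_mono: "(\<And>x. x \<in> A \<Longrightarrow> f x \<le> g x) \<Longrightarrow> sum f A \<le> sum g A"
proof (cases "finite A")
  case True assume h: "\<And>x. x \<in> A \<Longrightarrow> f x \<le> g x"
  show ?thesis unfolding sf_sum_le_iff[OF True]
    using h sf_member_le_sum[OF True] order_trans by blast
qed simp

lemma sf_prod_mono: "(\<And>x. x \<in> A \<Longrightarrow> f x \<le> g x) \<Longrightarrow> prod f A \<le> prod g A"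
proof (cases "finite A")
  case True assume h: "\<And>x. x \<in> A \<Longrightarrow> f x \<le> g x"
  show ?thesis using True h
    by (induction A rule: finite_induct) (auto intro!: sf_mult_mono)
qed simp

lemma sf_power_mono: "a \<le> b \<Longrightarrow> a ^ k \<le> b ^ k"
  by (induction k) (auto intro: sf_mult_mono)

lemma sf_power_nz: "a \<noteq> 0 \<Longrightarrow> a ^ k \<noteq> 0"
  by (induction k) (auto simp: sf_no_zero_div)

lemma sf_le_one_power: "z \<le> 1 \<Longrightarrow> 0 < k \<Longrightarrow> z ^ k \<le> z"
proof (induction k)
  case (Suc k)
  show ?case
  proof (cases "k = 0")
    case False
    then have "z ^ k \<le> 1" using Suc by auto
    then have "z * z ^ k \<le> z * 1" by (rule sf_mult_left_mono)
    then show ?thesis by simp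
  qed simp
qed simp

lemma sf_power_strict_mono: "x < y \<Longrightarrow> 0 < k \<Longrightarrow> x ^ k < y ^ k"
proof -
  assume xy: "x < y" and k: "0 < k"
  have le: "x ^ k \<le> y ^ k" using xy by (simp add: sf_power_mono)
  have y0: "y \<noteq> 0" using xy sf_zero_least[of x] by auto
  show ?thesis
  proof (rule ccontr)
    assume "\<not> x ^ k < y ^ k"
    then have eq: "x ^ k = y ^ k" using le by simp
    show False
    proof (cases "x = 0")
      case True then show False using eq k sf_power_nz[OF y0, of k] by (simp add: zero_power)
    next
      case False
      define z where "z = x * inverse y"
      have z1: "z \<le> 1" unfolding z_def using sf_mult_right_mono[of x y "inverse y"] xy right_inverse_sf[OF y0] by simp
      have zn1: "z \<noteq> 1" proof
        assume "z = 1" then have "x = inverse (inverse y)" unfolding z_def using sf_inverse_unique[of "inverse y" x] by (simp add: mult.commute)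
        then show False using xy sf_inverse_inverse[OF y0] by simp
      qed
      have "z ^ k = x ^ k * inverse y ^ k" unfolding z_def by (simp add: power_mult_distrib)
      also have "\<dots> = (y * inverse y) ^ k" using eq by (simp add: power_mult_distrib)
      also have "\<dots> = 1" using right_inverse_sf[OF y0] by simp
      finally have "z ^ k = 1" .
      then have "1 \<le> z" using sf_le_one_power[OF z1 k] by simp
      then show False using z1 zn1 by simp
    qed
  qed
qed

lemma sf_power_le_cancel: "0 < k \<Longrightarrow> x ^ k \<le> y ^ k \<Longrightarrow> x \<le> y"
  using sf_power_strict_mono[of y x k] by (meson not_le)

end

lemma root_sf_power: "0 < k \<Longrightarrow> root_sf k a ^ k = a"
  unfolding root_sf_def by (rule someI_ex[OF alg_complete])

lemma root_sf_le: "0 < k \<Longrightarrow> a \<le> c ^ k \<Longrightarrow> root_sf k a \<le> c"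
  using root_sf_power sf_power_le_cancel by metis


definition pw :: "('n \<Rightarrow> 'n \<Rightarrow> 'a::idem_semifield) \<Rightarrow> (nat \<Rightarrow> 'n) \<Rightarrow> nat \<Rightarrow> 'a" where
  "pw M s p = (\<Prod>t<p. M (s t) (s (Suc t)))"

lemma pw_Suc: "pw M s (Suc p) = pw M s p * M (s p) (s (Suc p))"
  by (simp add: pw_def)

lemma pw_cong: "(\<And>t. t \<le> p \<Longrightarrow> s t = s' t) \<Longrightarrow> pw M s p = pw M s' p"
  unfolding pw_def by (intro prod.cong) auto

lemma path_le: "s 0 = i \<Longrightarrow> s p = j \<Longrightarrow> pw M s p \<le> mpow M p i j"
proof (induction p arbitrary: j)
  case 0 then show ?case by (simp add: pw_def mid_def)
next
  case (Suc p)
  have "pw M s (Suc p) \<le> mpow M p i (s p) * M (s p) j"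
    using Suc by (simp add: pw_Suc sf_mult_right_mono)
  also have "\<dots> \<le> (\<Sum>k\<in>UNIV. mpow M p i k * M k j)"
    by (rule sf_member_le_sum[where f="\<lambda>k. mpow M p i k * M k j"]) auto
  finally show ?case by (simp add: mmult_def)
qed

lemma mpow_le_char:
  "(\<And>s. s 0 = i \<Longrightarrow> s p = j \<Longrightarrow> a * pw M s p \<le> c) \<Longrightarrow> a * mpow M p i j \<le> c"
proof (induction p arbitrary: j a)
  case 0 then show ?case
  proof (cases "i = j")
    case True
    have "a * pw M (\<lambda>_. i) 0 \<le> c" using 0 True by auto
    then show ?thesis using True by (simp add: pw_def mid_def)
  qed (simp add: mid_def sf_zero_least)
next
  case (Suc p)
  have "a * (mpow M p i k * M k j) \<le> c" for k
  proof -
    have "(a * M k j) * mpow M p i k \<le> c"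
    proof (rule Suc.IH)
      fix s assume s: "s 0 = i" "s p = k"
      define s' where "s' = s(Suc p := j)"
      have "pw M s' p = pw M s p" by (rule pw_cong) (simp add: s'_def)
      then have "pw M s' (Suc p) = pw M s p * M k j"
        using s by (simp add: pw_Suc s'_def)
      moreover have "a * pw M s' (Suc p) \<le> c" using Suc.prems s by (simp add: s'_def)
      ultimately show "a * M k j * pw M s p \<le> c" by (simp add: ac_simps)
    qed
    then show ?thesis by (simp add: ac_simps)
  qed
  then show ?case by (simp add: mmult_def sum_distrib_left sf_sum_le_iff)
qed

lemma pw_shorten:
  assumes "a < b" "b \<le> p" "s a = s b"
  defines "d \<equiv> b - a"
  defines "s' \<equiv> (\<lambda>t. if t < a then s t else s (t + d))"
  shows "pw M s p = pw M s' (p - d) * (\<Prod>t\<in>{a..<b}. M (s t) (s (Suc t)))"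
proof -
  let ?g = "\<lambda>t. M (s t) (s (Suc t))"
  have "pw M s p = prod ?g {0..<a} * prod ?g {a..<b} * prod ?g {b..<p}"
    unfolding pw_def using assms(1,2)
    by (simp add: prod.atLeastLessThan_concat lessThan_atLeast0)
  moreover have "prod ?g {0..<a} = (\<Prod>t\<in>{0..<a}. M (s' t) (s' (Suc t)))"
  proof (rule prod.cong)
    fix t assume t: "t \<in> {0..<a}"
    show "?g t = M (s' t) (s' (Suc t))"
    proof (cases "Suc t < a")
      case True then show ?thesis using t by (simp add: s'_def)
    next
      case False
      then have "Suc t = a" using t by simp
      then have "Suc t + d = b" using assms(1) by (simp add: d_def)
      then show ?thesis using t False \<open>Suc t = a\<close> assms(3) by (simp add: s'_def)
    qed
  qed simp
  moreover have "prod ?g {b..<p} = (\<Prod>t\<in>{a..<p-d}. M (s' t) (s' (Suc t)))"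
  proof -
    have "prod ?g {b..<p} = prod ?g {a+d..<(p-d)+d}" using assms(1,2) by (simp add: d_def)
    also have "\<dots> = (\<Prod>t\<in>{a..<p-d}. ?g (t + d))" by (rule prod.shift_bounds_nat_ivl)
    also have "\<dots> = (\<Prod>t\<in>{a..<p-d}. M (s' t) (s' (Suc t)))"
      by (rule prod.cong) (auto simp: s'_def)
    finally show ?thesis .
  qed
  moreover have "pw M s' (p - d) = (\<Prod>t\<in>{0..<a}. M (s' t) (s' (Suc t))) * (\<Prod>t\<in>{a..<p-d}. M (s' t) (s' (Suc t)))"
    unfolding pw_def using assms(1,2)
    by (simp add: prod.atLeastLessThan_concat lessThan_atLeast0 d_def)
  ultimately show ?thesis by (simp add: ac_simps)
qed

definition cyc_le1 :: "('n::finite \<Rightarrow> 'n \<Rightarrow> 'a::idem_semifield) \<Rightarrow> bool" where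
  "cyc_le1 M \<longleftrightarrow> (\<forall>s a b. a < b \<longrightarrow> b - a \<le> card (UNIV::'n set) \<longrightarrow> s a = s b \<longrightarrow>
       (\<Prod>t\<in>{a..<b}. M (s t) (s (Suc t))) \<le> 1)"

lemma short_path:
  fixes M :: "'n::finite \<Rightarrow> 'n \<Rightarrow> 'a::idem_semifield"
  assumes "cyc_le1 M"
  shows "s 0 = i \<Longrightarrow> s p = j \<Longrightarrow> \<exists>q<card (UNIV::'n set). pw M s p \<le> mpow M q i j"
proof (induction p arbitrary: s rule: less_induct)
  case (less p)
  show ?case
  proof (cases "p < card (UNIV::'n set)")
    case True then show ?thesis using path_le less.prems by blast
  next
    case False
    let ?n = "card (UNIV::'n set)"
    have "\<not> inj_on s {..?n}"
    proof
      assume "inj_on s {..?n}"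
      then have "card {..?n} \<le> card (UNIV :: 'n set)"
        by (rule card_inj_on_le) auto
      then show False by simp
    qed
    then obtain x y where xy: "x \<le> ?n" "y \<le> ?n" "x \<noteq> y" "s x = s y"
      unfolding inj_on_def by auto
    then obtain a b where ab: "a < b" "b \<le> ?n" "s a = s b"
      by (metis linorder_neqE_nat)
    define d where "d = b - a"
    define s' where "s' = (\<lambda>t. if t < a then s t else s (t + d))"
    have bp: "b \<le> p" using ab False by simp
    have eq: "pw M s p = pw M s' (p - d) * (\<Prod>t\<in>{a..<b}. M (s t) (s (Suc t)))"
      unfolding s'_def d_def using pw_shorten[OF ab(1) bp ab(3), where M=M] by simp
    have c1: "(\<Prod>t\<in>{a..<b}. M (s t) (s (Suc t))) \<le> 1"
      using assms ab unfolding cyc_le1_def by auto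
    have "s' 0 = i" using less.prems ab by (auto simp: s'_def d_def)
    moreover have "s' (p - d) = j" using less.prems ab bp by (auto simp: s'_def d_def)
    moreover have "p - d < p" using ab bp by (simp add: d_def)
    ultimately obtain q where q: "q < ?n" "pw M s' (p - d) \<le> mpow M q i j"
      using less.IH by blast
    have "pw M s p \<le> pw M s' (p - d) * 1"
      unfolding eq using c1 by (rule sf_mult_left_mono)
    then show ?thesis using q by auto
  qed
qed

lemma mpow_le_kstar:
  fixes M :: "'n::finite \<Rightarrow> 'n \<Rightarrow> 'a::idem_semifield"
  assumes "cyc_le1 M"
  shows "mpow M p i j \<le> kstar M i j"
proof -
  have "1 * mpow M p i j \<le> kstar M i j"
  proof (rule mpow_le_char)
    fix s assume "s 0 = i" "s p = j"
    then obtain q where q: "q < card (UNIV::'n set)" "pw M s p \<le> mpow M q i j"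
      using short_path[OF assms] by blast
    note q(2)
    also have "mpow M q i j \<le> kstar M i j"
      unfolding kstar_def using q(1) by (intro sf_member_le_sum) auto
    finally show "1 * pw M s p \<le> kstar M i j" by simp
  qed
  then show ?thesis by simp
qed

lemma card_pos: "0 < card (UNIV::'n::finite set)"
  by (simp add: card_gt_0_iff)

lemma sub_mpow:
  assumes "\<forall>i j. M i j * x j \<le> x i"
  shows "mpow M p i j * x j \<le> x i"
proof (induction p arbitrary: j)
  case 0 then show ?case by (simp add: mid_def sf_zero_least)
next
  case (Suc p)
  have "mpow M p i k * M k j * x j \<le> x i" for k
  proof -
    have "mpow M p i k * (M k j * x j) \<le> mpow M p i k * x k"
      using assms by (intro sf_mult_left_mono) auto
    also have "\<dots> \<le> x i" using Suc .
    finally show ?thesis by (simp add: ac_simps)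
  qed
  then show ?case by (simp add: mmult_def sum_distrib_right sf_sum_le_iff)
qed

lemma mvec_kstar_fix:
  fixes M :: "'n::finite \<Rightarrow> 'n \<Rightarrow> 'a::idem_semifield"
  assumes "\<forall>i j. M i j * x j \<le> x i"
  shows "mvec (kstar M) x = x"
proof
  fix i
  have le: "mvec (kstar M) x i \<le> x i"
    unfolding mvec_def kstar_def
    by (simp add: sum_distrib_right sf_sum_le_iff sub_mpow[OF assms])
  have "x i = mpow M 0 i i * x i" by (simp add: mid_def)
  also have "\<dots> \<le> kstar M i i * x i"
    unfolding kstar_def by (intro sf_mult_right_mono sf_member_le_sum) (auto simp: card_pos)
  also have "\<dots> \<le> mvec (kstar M) x i"
    unfolding mvec_def by (intro sf_member_le_sum) auto
  finally show "mvec (kstar M) x i = x i" using le by simp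
qed

lemma kstar_regular:
  fixes M :: "'n::finite \<Rightarrow> 'n \<Rightarrow> 'a::idem_semifield"
  assumes "\<forall>i j. M i j \<noteq> 0" "u \<noteq> (\<lambda>_. 0)"
  shows "regular (mvec (kstar M) u)"
  unfolding regular_def
proof
  fix i
  obtain j where j: "u j \<noteq> 0" using assms(2) by auto
  have kne: "kstar M i j \<noteq> 0"
  proof (cases "i = j")
    case True
    have "mpow M 0 i j \<le> kstar M i j"
      unfolding kstar_def by (intro sf_member_le_sum) (auto simp: card_pos)
    then have "1 \<le> kstar M i j" using True by (simp add: mid_def)
    then show ?thesis by (metis order_antisym sf_zero_least zero_neq_one)
  next
    case False
    have "card {i, j} \<le> card (UNIV::'n set)" by (rule card_mono) auto
    then have "1 < card (UNIV::'n set)" using False by simp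
    then have "mpow M 1 i j \<le> kstar M i j"
      unfolding kstar_def by (intro sf_member_le_sum) auto
    moreover have "mid i i * M i j \<le> (\<Sum>k\<in>UNIV. mid i k * M k j)"
      by (rule sf_member_le_sum[where f="\<lambda>k. mid i k * M k j"]) auto
    moreover have "mpow M 1 i j = (\<Sum>k\<in>UNIV. mid i k * M k j)"
      by (simp add: mmult_def One_nat_def)
    ultimately have "M i j \<le> kstar M i j" by (simp add: mid_def)
    then show ?thesis using assms(1) sf_zero_least[of "M i j"] by auto
  qed
  have "kstar M i j * u j \<le> mvec (kstar M) u i"
    unfolding mvec_def by (intro sf_member_le_sum) auto
  moreover have "kstar M i j * u j \<noteq> 0" using kne j by (simp add: sf_no_zero_div)
  ultimately show "mvec (kstar M) u i \<noteq> 0" using sf_zero_least by (metis order_antisym)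
qed

lemma kstar_sub:
  fixes M :: "'n::finite \<Rightarrow> 'n \<Rightarrow> 'a::idem_semifield"
  assumes "cyc_le1 M"
  shows "M i j * mvec (kstar M) u j \<le> mvec (kstar M) u i"
proof -
  have "M i j * (mpow M p j l * u l) \<le> kstar M i l * u l" for p l
  proof -
    have "M i j * mpow M p j l \<le> mpow M (Suc p) i l"
    proof (rule mpow_le_char)
      fix s assume s: "s 0 = j" "s p = l"
      define s' where "s' = (\<lambda>t. if t = 0 then i else s (t - 1))"
      have "pw M s' (Suc p) = M i j * pw M s p"
        unfolding pw_def prod.lessThan_Suc_shift using s by (simp add: s'_def)
      moreover have "pw M s' (Suc p) \<le> mpow M (Suc p) i l"
        by (rule path_le) (auto simp: s'_def s)
      ultimately show "M i j * pw M s p \<le> mpow M (Suc p) i l" by simp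
    qed
    also have "\<dots> \<le> kstar M i l" by (rule mpow_le_kstar[OF assms])
    finally show ?thesis by (simp add: mult.assoc[symmetric] sf_mult_right_mono)
  qed
  then have "\<forall>l\<in>UNIV. \<forall>p\<in>{..<card (UNIV::'n set)}. M i j * (mpow M p j l * u l) \<le> mvec (kstar M) u i"
    unfolding mvec_def using sf_member_le_sum order_trans
    by (metis (no_types, lifting) finite_UNIV UNIV_I)
  then show ?thesis
    unfolding mvec_def kstar_def
    by (simp add: sum_distrib_right sum_distrib_left sf_sum_le_iff)
qed


lemma vinv_reg: "regular x \<Longrightarrow> vinv x i = inverse (x i)"
  by (simp add: regular_def vinv_def)

lemma mdist_outer:
  fixes A :: "'n::finite \<Rightarrow> 'n \<Rightarrow> 'a::idem_semifield"
  assumes reg: "regular x"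
  shows "mdist A (outer_inv x) = (\<Sum>i\<in>UNIV. \<Sum>l\<in>UNIV. inverse (x i) * (A i l + minv A i l) * x l)"
proof -
  have nz: "\<And>i. x i \<noteq> 0" using reg by (simp add: regular_def)
  have h2: "\<And>i l. outer_inv x i l = x i * inverse (x l)"
    using reg by (simp add: outer_inv_def vinv_reg)
  have h1: "\<And>i l. minv (outer_inv x) i l = x i * inverse (x l)"
  proof -
    fix i l
    have "outer_inv x l i \<noteq> 0" using nz by (simp add: h2 sf_no_zero_div sf_inverse_nz)
    then have "minv (outer_inv x) i l = inverse (x l * inverse (x i))" by (simp add: minv_def h2)
    also have "\<dots> = x i * inverse (x l)"
      using nz by (simp add: sf_inverse_mult sf_inverse_nz sf_inverse_inverse mult.commute)
    finally show "minv (outer_inv x) i l = x i * inverse (x l)" .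
  qed
  have S1: "mtr (mmult (minv (outer_inv x)) A) = (\<Sum>i\<in>UNIV. \<Sum>l\<in>UNIV. inverse (x i) * A i l * x l)"
  proof -
    have "mtr (mmult (minv (outer_inv x)) A) = (\<Sum>i\<in>UNIV. \<Sum>l\<in>UNIV. inverse (x l) * A l i * x i)"
      unfolding mtr_def mmult_def h1 by (simp add: ac_simps)
    also have "\<dots> = (\<Sum>l\<in>UNIV. \<Sum>i\<in>UNIV. inverse (x l) * A l i * x i)"
      by (rule sum.swap)
    finally show ?thesis .
  qed
  have S2: "mtr (mmult (minv A) (outer_inv x)) = (\<Sum>i\<in>UNIV. \<Sum>l\<in>UNIV. inverse (x i) * minv A i l * x l)"
    unfolding mtr_def mmult_def h2 by (simp add: ac_simps)
  show ?thesis
    unfolding mdist_def S1 S2 sum.distrib[symmetric] by (simp add: algebra_simps)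
qed

lemma bij_suc_mod: "0 < k \<Longrightarrow> bij_betw (\<lambda>j. Suc j mod k) {..<k} {..<k}"
proof -
  assume k: "0 < k"
  have inj: "inj_on (\<lambda>j. Suc j mod k) {..<k}"
    by (auto simp: inj_on_def mod_Suc split: if_splits)
  have "(\<lambda>j. Suc j mod k) ` {..<k} \<subseteq> {..<k}" using k by auto
  then have "(\<lambda>j. Suc j mod k) ` {..<k} = {..<k}" using inj by (simp add: endo_inj_surj)
  then show ?thesis using inj by (simp add: bij_betw_def)
qed

lemma spec_rad_le:
  fixes B :: "'n::finite \<Rightarrow> 'n \<Rightarrow> 'a::idem_semifield"
  assumes reg: "regular x" and H: "\<And>i j. inverse (x i) * B i j * x j \<le> c"
  shows "spec_rad B \<le> c"
proof -
  have nz: "\<And>i. x i \<noteq> 0" using reg by (simp add: regular_def)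
  have hB: "B i j \<le> c * (x i * inverse (x j))" for i j
  proof -
    have "B i j = x i * (inverse (x i) * B i j * x j) * inverse (x j)"
    proof -
      have "x i * (inverse (x i) * B i j * x j) * inverse (x j)
          = (x i * inverse (x i)) * B i j * (x j * inverse (x j))" by (simp add: ac_simps)
      then show ?thesis using nz by (simp add: right_inverse_sf)
    qed
    also have "\<dots> \<le> x i * c * inverse (x j)"
      by (intro sf_mult_right_mono sf_mult_left_mono H)
    finally show ?thesis by (simp add: ac_simps)
  qed
  have "root_sf k (\<Prod>j<k. B (t j) (t (Suc j mod k))) \<le> c" if k: "0 < k" for k t
  proof (rule root_sf_le[OF k])
    have "(\<Prod>j<k. B (t j) (t (Suc j mod k))) \<le> (\<Prod>j<k. c * (x (t j) * inverse (x (t (Suc j mod k)))))"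
      by (intro sf_prod_mono hB)
    also have "\<dots> = c ^ k * ((\<Prod>j<k. x (t j)) * (\<Prod>j<k. inverse (x (t (Suc j mod k)))))"
      by (simp add: prod.distrib)
    also have "(\<Prod>j<k. inverse (x (t (Suc j mod k)))) = (\<Prod>j<k. inverse (x (t j)))"
      using prod.reindex_bij_betw[OF bij_suc_mod[OF k], of "\<lambda>j. inverse (x (t j))"] by simp
    also have "(\<Prod>j<k. x (t j)) * (\<Prod>j<k. inverse (x (t j))) = 1"
      using nz by (simp add: prod.distrib[symmetric] right_inverse_sf)
    finally show "(\<Prod>j<k. B (t j) (t (Suc j mod k))) \<le> c ^ k" by simp
  qed
  then show ?thesis
    unfolding spec_rad_def by (auto simp: sf_sum_le_iff finite_PiE)
qed

lemma spec_rad_nz: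
  fixes B :: "'n::finite \<Rightarrow> 'n \<Rightarrow> 'a::idem_semifield"
  assumes "\<forall>i j. B i j \<noteq> 0"
  shows "spec_rad B \<noteq> 0"
proof -
  obtain i0 :: 'n where True by simp
  define t where "t = restrict (\<lambda>_. i0) {..<1::nat}"
  have tmem: "t \<in> PiE {..<1} (\<lambda>_. (UNIV::'n set))"
    unfolding t_def by (rule iffD2[OF restrict_PiE_iff]) simp
  have "root_sf 1 (\<Prod>j<1. B (t j) (t (Suc j mod 1))) = B i0 i0"
    using root_sf_power[of 1 "B i0 i0"] by (simp add: t_def)
  moreover have "root_sf 1 (\<Prod>j<1. B (t j) (t (Suc j mod 1))) \<le>
      (\<Sum>t\<in>PiE {..<1} (\<lambda>_. (UNIV::'n set)). root_sf 1 (\<Prod>j<1. B (t j) (t (Suc j mod 1))))"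
    by (rule sf_member_le_sum[where f="\<lambda>t. root_sf 1 (\<Prod>j<1. B (t j) (t (Suc j mod 1)))"])
       (use tmem in \<open>simp_all add: finite_PiE\<close>)
  moreover have "(\<Sum>t\<in>PiE {..<1} (\<lambda>_. (UNIV::'n set)). root_sf 1 (\<Prod>j<1. B (t j) (t (Suc j mod 1))))
      \<le> spec_rad B"
    unfolding spec_rad_def
    by (rule sf_member_le_sum[where f="\<lambda>k. \<Sum>t\<in>PiE {..<k} (\<lambda>_. (UNIV::'n set)). root_sf k (\<Prod>j<k. B (t j) (t (Suc j mod k)))"])
       (auto simp: card_pos Suc_le_eq)
  ultimately have "B i0 i0 \<le> spec_rad B" by simp
  then show ?thesis using assms sf_zero_least[of "B i0 i0"] by (metis order_antisym)
qed

lemma cyc_from_spec: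
  fixes B :: "'n::finite \<Rightarrow> 'n \<Rightarrow> 'a::idem_semifield"
  assumes mnz: "spec_rad B \<noteq> 0"
  shows "cyc_le1 (msmult (inverse (spec_rad B)) B)"
  unfolding cyc_le1_def
proof (intro allI impI)
  fix s :: "nat \<Rightarrow> 'n" and a b :: nat
  assume ab: "a < b" "b - a \<le> card (UNIV::'n set)" "s a = s b"
  define k where "k = b - a"
  define \<mu> where "\<mu> = spec_rad B"
  define P where "P = (\<Prod>t\<in>{a..<b}. B (s t) (s (Suc t)))"
  define \<tau> where "\<tau> = restrict (\<lambda>j. s (a + j)) {..<k}"
  have k: "0 < k" "k \<le> card (UNIV::'n set)" using ab by (auto simp: k_def)
  have taumem: "\<tau> \<in> PiE {..<k} (\<lambda>_. (UNIV::'n set))"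
    unfolding \<tau>_def by (rule iffD2[OF restrict_PiE_iff]) simp
  have "P = (\<Prod>t\<in>{0+a..<k+a}. B (s t) (s (Suc t)))" using ab by (simp add: P_def k_def)
  also have "\<dots> = (\<Prod>j\<in>{0..<k}. B (s (j + a)) (s (Suc (j + a))))"
    by (rule prod.shift_bounds_nat_ivl)
  also have "\<dots> = (\<Prod>j<k. B (\<tau> j) (\<tau> (Suc j mod k)))"
  proof (unfold atLeast0LessThan, rule prod.cong)
    fix j assume j: "j \<in> {..<k}"
    have "s (a + Suc j mod k) = s (Suc (j + a))"
    proof (cases "Suc j < k")
      case True then show ?thesis by (simp add: add.commute)
    next
      case False
      then have sj: "Suc j = k" using j by simp
      then have "Suc (j + a) = b" using ab by (simp add: k_def)
      then show ?thesis using ab sj by simp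
    qed
    then show "B (s (j + a)) (s (Suc (j + a))) = B (\<tau> j) (\<tau> (Suc j mod k))"
      using j k by (simp add: \<tau>_def add.commute)
  qed simp
  finally have Peq: "P = (\<Prod>j<k. B (\<tau> j) (\<tau> (Suc j mod k)))" .
  have "root_sf k P \<le> (\<Sum>t\<in>PiE {..<k} (\<lambda>_. (UNIV::'n set)). root_sf k (\<Prod>j<k. B (t j) (t (Suc j mod k))))"
    unfolding Peq
    by (rule sf_member_le_sum[where f="\<lambda>t. root_sf k (\<Prod>j<k. B (t j) (t (Suc j mod k)))"])
       (simp_all add: finite_PiE taumem)
  also have "\<dots> \<le> \<mu>"
    unfolding spec_rad_def \<mu>_def
    by (rule sf_member_le_sum[where f="\<lambda>k. \<Sum>t\<in>PiE {..<k} (\<lambda>_. (UNIV::'n set)). root_sf k (\<Prod>j<k. B (t j) (t (Suc j mod k)))"])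
       (use k in auto)
  finally have "root_sf k P \<le> \<mu>" .
  then have Ple: "P \<le> \<mu> ^ k" using root_sf_power[OF k(1), of P] sf_power_mono by metis
  have "(\<Prod>t\<in>{a..<b}. msmult (inverse \<mu>) B (s t) (s (Suc t))) = inverse \<mu> ^ k * P"
    by (simp add: msmult_def prod.distrib P_def k_def)
  also have "\<dots> \<le> inverse \<mu> ^ k * \<mu> ^ k" using Ple by (rule sf_mult_left_mono)
  also have "\<dots> = 1" using mnz by (simp add: \<mu>_def power_mult_distrib[symmetric] sf_left_inverse)
  finally show "(\<Prod>t\<in>{a..<b}. msmult (inverse (spec_rad B)) B (s t) (s (Suc t))) \<le> 1"
    by (simp add: \<mu>_def)
qed

lemma cancel_lemma:
  fixes \<mu> b :: "'a::idem_semifield"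
  assumes "\<mu> \<noteq> 0" "xi \<noteq> 0"
  shows "(inverse xi * b * xj \<le> \<mu>) \<longleftrightarrow> (inverse \<mu> * b * xj \<le> xi)"
proof -
  define c where "c = \<mu> * inverse xi"
  have cnz: "c \<noteq> 0" using assms by (simp add: c_def sf_no_zero_div sf_inverse_nz)
  have e1: "c * (inverse \<mu> * b * xj) = inverse xi * b * xj"
  proof -
    have "c * (inverse \<mu> * b * xj) = (\<mu> * inverse \<mu>) * (inverse xi * b * xj)"
      by (simp add: c_def ac_simps)
    then show ?thesis using assms by (simp add: right_inverse_sf)
  qed
  have e2: "c * xi = \<mu>" using assms by (simp add: c_def mult.assoc sf_left_inverse)
  show ?thesis using sf_mult_le_cancel[OF cnz, of "inverse \<mu> * b * xj" xi] e1 e2 by simp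
qed


theorem theorem3:
  fixes A :: "nat \<Rightarrow> 'n::finite \<Rightarrow> 'n \<Rightarrow> 'a::idem_semifield"
    and w :: "nat \<Rightarrow> 'a" and m :: nat
  defines "B \<equiv> (\<lambda>i j. \<Sum>k<m. msmult (w k) (madd (A k) (minv (A k))) i j)"
  defines "\<mu> \<equiv> spec_rad B"
  defines "B\<mu> \<equiv> msmult (inverse \<mu>) B"
  defines "f \<equiv> (\<lambda>x::'n \<Rightarrow> 'a. \<Sum>k<m. w k * mdist (A k) (outer_inv x))"
  assumes "\<forall>i j. B i j \<noteq> 0"
  shows "(\<forall>x. regular x \<longrightarrow> \<mu> \<le> f x) \<and> (\<exists>x. regular x \<and> f x = \<mu>) \<and>
         {x. regular x \<and> f x = \<mu>} = {mvec (kstar B\<mu>) u | u. u \<noteq> (\<lambda>_. 0)}"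
proof -
  have Bnz: "\<forall>i j. B i j \<noteq> 0" by fact
  have \<mu>nz: "\<mu> \<noteq> 0" unfolding \<mu>_def by (rule spec_rad_nz[OF Bnz])
  have cyc: "cyc_le1 B\<mu>" unfolding B\<mu>_def \<mu>_def by (rule cyc_from_spec) (simp add: \<mu>nz[unfolded \<mu>_def])
  have Mnz: "\<forall>i j. B\<mu> i j \<noteq> 0"
    using Bnz \<mu>nz by (simp add: B\<mu>_def msmult_def sf_no_zero_div sf_inverse_nz)
  have feq: "f x = (\<Sum>i\<in>UNIV. \<Sum>j\<in>UNIV. inverse (x i) * B i j * x j)" if reg: "regular x" for x
  proof -
    have "f x = (\<Sum>k<m. \<Sum>i\<in>UNIV. \<Sum>j\<in>UNIV. inverse (x i) * (w k * (A k i j + minv (A k) i j)) * x j)"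
      unfolding f_def mdist_outer[OF reg] by (simp add: sum_distrib_left ac_simps)
    also have "\<dots> = (\<Sum>i\<in>UNIV. \<Sum>k<m. \<Sum>j\<in>UNIV. inverse (x i) * (w k * (A k i j + minv (A k) i j)) * x j)"
      by (rule sum.swap)
    also have "\<dots> = (\<Sum>i\<in>UNIV. \<Sum>j\<in>UNIV. \<Sum>k<m. inverse (x i) * (w k * (A k i j + minv (A k) i j)) * x j)"
      by (rule sum.cong[OF refl], rule sum.swap)
    also have "\<dots> = (\<Sum>i\<in>UNIV. \<Sum>j\<in>UNIV. inverse (x i) * B i j * x j)"
      unfolding B_def msmult_def madd_def by (simp add: sum_distrib_left sum_distrib_right)
    finally show ?thesis .
  qed
  have low: "\<mu> \<le> f x" if reg: "regular x" for x
    unfolding \<mu>_def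
  proof (rule spec_rad_le[OF reg])
    fix i j
    have "inverse (x i) * B i j * x j \<le> (\<Sum>j\<in>UNIV. inverse (x i) * B i j * x j)"
      by (rule sf_member_le_sum[where f="\<lambda>j. inverse (x i) * B i j * x j"]) auto
    also have "\<dots> \<le> (\<Sum>i\<in>UNIV. \<Sum>j\<in>UNIV. inverse (x i) * B i j * x j)"
      by (rule sf_member_le_sum[where f="\<lambda>i. \<Sum>j\<in>UNIV. inverse (x i) * B i j * x j"]) auto
    finally show "inverse (x i) * B i j * x j \<le> f x" using feq[OF reg] by simp
  qed
  have Lq: "f x \<le> \<mu> \<longleftrightarrow> (\<forall>i j. B\<mu> i j * x j \<le> x i)" if reg: "regular x" for x
  proof -
    have nz: "\<And>i. x i \<noteq> 0" using reg by (simp add: regular_def)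
    have "f x \<le> \<mu> \<longleftrightarrow> (\<forall>i j. inverse (x i) * B i j * x j \<le> \<mu>)"
      unfolding feq[OF reg] by (simp add: sf_sum_le_iff)
    also have "\<dots> \<longleftrightarrow> (\<forall>i j. B\<mu> i j * x j \<le> x i)"
      using cancel_lemma[OF \<mu>nz nz] by (simp add: B\<mu>_def msmult_def)
    finally show ?thesis .
  qed
  have up: "regular x \<and> f x = \<mu>" if x: "x = mvec (kstar B\<mu>) u" and u: "u \<noteq> (\<lambda>_. 0)" for x u
  proof -
    have reg: "regular x" unfolding x by (rule kstar_regular[OF Mnz u])
    have "\<forall>i j. B\<mu> i j * x j \<le> x i" unfolding x using kstar_sub[OF cyc] by blast
    then have "f x \<le> \<mu>" using Lq[OF reg] by simp
    then show ?thesis using low[OF reg] reg by simp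
  qed
  have part3: "{x. regular x \<and> f x = \<mu>} = {mvec (kstar B\<mu>) u | u. u \<noteq> (\<lambda>_. 0)}"
  proof
    show "{x. regular x \<and> f x = \<mu>} \<subseteq> {mvec (kstar B\<mu>) u | u. u \<noteq> (\<lambda>_. 0)}"
    proof
      fix x assume "x \<in> {x. regular x \<and> f x = \<mu>}"
      then have reg: "regular x" and fx: "f x = \<mu>" by auto
      have "\<forall>i j. B\<mu> i j * x j \<le> x i" using Lq[OF reg] fx by simp
      then have "x = mvec (kstar B\<mu>) x" by (simp add: mvec_kstar_fix)
      moreover have "x \<noteq> (\<lambda>_. 0)" using reg by (auto simp: regular_def)
      ultimately show "x \<in> {mvec (kstar B\<mu>) u | u. u \<noteq> (\<lambda>_. 0)}" by blast
    qed
  next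
    show "{mvec (kstar B\<mu>) u | u. u \<noteq> (\<lambda>_. 0)} \<subseteq> {x. regular x \<and> f x = \<mu>}"
      using up by blast
  qed
  have ex: "\<exists>x. regular x \<and> f x = \<mu>"
  proof -
    have "(\<lambda>_::'n. 1::'a) \<noteq> (\<lambda>_. 0)" by (metis zero_neq_one)
    then show ?thesis using up by blast
  qed
  show ?thesis using low ex part3 by blast
qed

end
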